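(* Let $w_1,w_2\ge2$ be even. The map $\psi:V_{w_1,w_2}^{\mathbb Q}[I_D]\to W_{w_1+w_2}^{\mathbb Q}$, $P(X_1,X_2)\mapsto P(Z,Z)$, is well defined and surjective, and it admits a rational section: if $P(Z)=\sum_{m=0}^{w_1+w_2}\binom{w_1+w_2}{m}a_m(-Z)^{w_1+w_2-m}\in W_{w_1+w_2}^{\mathbb Q}$, then $Q(X_1,X_2)=\sum_{m_1=0}^{w_1}\sum_{m_2=0}^{w_2}\binom{w_1}{m_1}\binom{w_2}{m_2}a_{m_1+m_2}(-X_1)^{w_1-m_1}(-X_2)^{w_2-m_2}$ lies in $V_{w_1,w_2}^{\mathbb Q}[I_D]$ and satisfies $Q(Z,Z)=P(Z)$.
   Context: $\Gamma=PSL_2(\mathbb Z)$, $S=\pm\begin{pmatrix}0&-1\\1&0\end{pmatrix}$, $U=\pm\begin{pmatrix}0&1\\-1&1\end{pmatrix}$. For even $w$, $V_w^{\mathbb Q}$ is the space of rational polynomials of degree $\le w$ with action $\gamma.P(X)=(-cX+a)^wP\big(\frac{dX-b}{-cX+a}\big)$ for $\gamma=\pm\begin{pmatrix}a&b\\c&d\end{pmatrix}$; $W_w^{\mathbb Q}=\{P\in V_w^{\mathbb Q}:(1+S).P=(1+U+U^2).P=0\}$. $V_{w_1,w_2}^{\mathbb Q}$ is the space of rational polynomials in $X_1,X_2$ with $\deg_{X_j}\le w_j$, with action $(\gamma_1,\gamma_2).P(X_1,X_2)=(-c_1X_1+a_1)^{w_1}(-c_2X_2+a_2)^{w_2}P\big(\frac{d_1X_1-b_1}{-c_1X_1+a_1},\frac{d_2X_2-b_2}{-c_2X_2+a_2}\big)$,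 extended linearly to $\mathbb Z[\Gamma^2]$; $V_{w_1,w_2}^{\mathbb Q}[I_D]=\{P\in V_{w_1,w_2}^{\mathbb Q}:[(1,1)+(S,S)].P=[(1,1)+(U,U)+(U^2,U^2)].P=0\}$. *)

theory Defs
  imports "HOL-Computational_Algebra.Polynomial"
begin

text \<open>Elements of PSL_2(Z) are represented by integer matrices (a,b,c,d) (a representative
of the class +-M); since the weights are even the action does not depend on the sign.\<close>

type_synonym mat2 = "int \<times> int \<times> int \<times> int"

definition mat2_mult :: "mat2 \<Rightarrow> mat2 \<Rightarrow> mat2" where
  "mat2_mult M N = (case M of (a,b,c,d) \<Rightarrow> case N of (a',b',c',d') \<Rightarrow>
     (a*a' + b*c', a*b' + b*d', c*a' + d*c', c*b' + d*d'))"

definition S_mat :: mat2 where "S_mat = (0, -1, 1, 0)"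
definition U_mat :: mat2 where "U_mat = (0, 1, -1, 1)"
definition U2_mat :: mat2 where "U2_mat = mat2_mult U_mat U_mat"

definition numer :: "mat2 \<Rightarrow> rat poly" where
  "numer g = (case g of (a,b,c,d) \<Rightarrow> [:- of_int b, of_int d:])"
definition denom :: "mat2 \<Rightarrow> rat poly" where
  "denom g = (case g of (a,b,c,d) \<Rightarrow> [:of_int a, - of_int c:])"

text \<open>One-variable space V_w: rational polynomials of degree at most w, and the action
  g.P(X) = (-cX+a)^w P((dX-b)/(-cX+a)).\<close>
definition V1 :: "nat \<Rightarrow> rat poly set" where
  "V1 w = {P. degree P \<le> w}"

definition act1 :: "nat \<Rightarrow> mat2 \<Rightarrow> rat poly \<Rightarrow> rat poly" where
  "act1 w g P = (\<Sum>k\<le>w. smult (coeff P k) (numer g ^ k * denom g ^ (w - k)))"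

definition W1 :: "nat \<Rightarrow> rat poly set" where
  "W1 w = {P \<in> V1 w. P + act1 w S_mat P = 0 \<and>
                     P + act1 w U_mat P + act1 w U2_mat P = 0}"

text \<open>Two-variable polynomials: rat poly poly, outer variable X2, inner variable X1
  (coefficient of X1^i X2^j is coeff (coeff P j) i).\<close>
definition V2 :: "nat \<Rightarrow> nat \<Rightarrow> rat poly poly set" where
  "V2 w1 w2 = {P. degree P \<le> w2 \<and> (\<forall>j. degree (coeff P j) \<le> w1)}"

definition act2 :: "nat \<Rightarrow> nat \<Rightarrow> mat2 \<Rightarrow> mat2 \<Rightarrow> rat poly poly \<Rightarrow> rat poly poly" where
  "act2 w1 w2 g1 g2 P = (\<Sum>j\<le>w2. \<Sum>i\<le>w1.
      [: smult (coeff (coeff P j) i) (numer g1 ^ i * denom g1 ^ (w1 - i)) :] *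
      (map_poly (\<lambda>c. [:c:]) (numer g2 ^ j * denom g2 ^ (w2 - j))))"

definition V2_ID :: "nat \<Rightarrow> nat \<Rightarrow> rat poly poly set" where
  "V2_ID w1 w2 = {P \<in> V2 w1 w2. P + act2 w1 w2 S_mat S_mat P = 0 \<and>
      P + act2 w1 w2 U_mat U_mat P + act2 w1 w2 U2_mat U2_mat P = 0}"

definition diag :: "rat poly poly \<Rightarrow> rat poly" where
  "diag P = poly P [:0, 1:]"

end

theory Submission
  imports Defs
begin

abbreviation Mc :: "rat poly \<Rightarrow> rat poly poly" where
  "Mc p \<equiv> map_poly (\<lambda>c. [:c:]) p"

lemma smult_sum_right: "smult c (\<Sum>i\<in>A. f i) = (\<Sum>i\<in>A. smult c (f i))"
  by (induct A rule: infinite_finite_induct) (auto simp: smult_add_right)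

lemma coeff_Mc[simp]: "coeff (Mc p) n = [:coeff p n:]"
  by (simp add: coeff_map_poly)

lemma Mc_add: "Mc (p + q) = Mc p + Mc q"
  by (rule poly_eqI) simp

lemma Mc_sum: "Mc (\<Sum>i\<in>A. f i) = (\<Sum>i\<in>A. Mc (f i))"
  by (induct A rule: infinite_finite_induct) (auto simp: Mc_add)

lemma Mc_smult: "Mc (smult c p) = smult [:c:] (Mc p)"
  by (rule poly_eqI) simp

lemma act1_add: "act1 w g (P + Q) = act1 w g P + act1 w g Q"
  by (simp add: act1_def sum.distrib smult_add_left)

lemma act1_smult: "act1 w g (smult c P) = smult c (act1 w g P)"
  by (simp add: act1_def smult_sum_right)

lemma act1_zero[simp]: "act1 w g 0 = 0"
  by (simp add: act1_def)

lemma act1_sum: "act1 w g (\<Sum>i\<in>A. f i) = (\<Sum>i\<in>A. act1 w g (f i))"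
  by (induct A rule: infinite_finite_induct) (auto simp: act1_add)

lemma act1_monom: assumes "k \<le> w" shows "act1 w g (monom c k) = smult c (numer g ^ k * denom g ^ (w-k))"
proof -
  have "act1 w g (monom c k) = (\<Sum>ka\<le>w. if ka = k then smult c (numer g ^ ka * denom g ^ (w - ka)) else 0)"
    unfolding act1_def by (rule sum.cong) auto
  also have "\<dots> = smult c (numer g ^ k * denom g ^ (w-k))"
    using assms by (subst sum.delta) auto
  finally show ?thesis .
qed

lemma act2_add: "act2 w1 w2 g1 g2 (P + Q) = act2 w1 w2 g1 g2 P + act2 w1 w2 g1 g2 Q"
  by (simp add: act2_def sum.distrib smult_add_left algebra_simps)

lemma act2_smult: "act2 w1 w2 g1 g2 (smult [:c:] P) = smult [:c:] (act2 w1 w2 g1 g2 P)"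
  by (simp add: act2_def smult_sum_right mult.commute)

lemma act2_zero[simp]: "act2 w1 w2 g1 g2 0 = 0"
  by (simp add: act2_def)

lemma act2_sum: "act2 w1 w2 g1 g2 (\<Sum>i\<in>A. f i) = (\<Sum>i\<in>A. act2 w1 w2 g1 g2 (f i))"
  by (induct A rule: infinite_finite_induct) (auto simp: act2_add)

lemma const_add: "[:a + b:] = [:a:] + [:b:]"
  by (rule poly_eqI) (simp add: coeff_pCons split: nat.split)

lemma const_sum: "[:\<Sum>i\<in>A. f i:] = (\<Sum>i\<in>A. [:f i:])"
  by (induct A rule: infinite_finite_induct) (auto simp: const_add)

lemma act2_prod:
  "act2 w1 w2 g1 g2 ([:F:] * Mc G) = [:act1 w1 g1 F:] * Mc (act1 w2 g2 G)"
proof -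
  have c: "coeff (coeff ([:F:] * Mc G) j) i = coeff F i * coeff G j" for i j
    by simp
  have "[:act1 w1 g1 F:] * Mc (act1 w2 g2 G) =
(\<Sum>j\<le>w2. \<Sum>i\<le>w1. [:smult (coeff F i) (numer g1 ^ i * denom g1 ^ (w1 - i)):] *
         smult [:coeff G j:] (Mc (numer g2 ^ j * denom g2 ^ (w2 - j))))"
    unfolding act1_def const_sum Mc_sum Mc_smult sum_distrib_left sum_distrib_right ..
  also have "\<dots> = act2 w1 w2 g1 g2 ([:F:] * Mc G)"
    unfolding act2_def c by (intro sum.cong refl) (simp add: mult_ac)
  finally show ?thesis ..
qed

lemma Mc_pCons: "Mc (pCons a p) = pCons [:a:] (Mc p)"
  by (rule map_poly_pCons) simp

lemma Mc_mult: "Mc (p * q) = Mc p * Mc q"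
  by (induct p) (simp_all add: Mc_add Mc_smult Mc_pCons)

lemma Mc_power: "Mc (p ^ n) = Mc p ^ n"
  by (induct n) (simp_all add: Mc_mult)

lemma Mc_X: "Mc [:0, -1:] = [:0, -1:]"
  by (simp add: Mc_pCons one_pCons minus_pCons)

lemma X_power: "[:0, c:] ^ k = monom (c ^ k) k"
proof -
  have "[:0, c:] = monom c 1" by (simp add: monom_Suc monom_0)
  then show ?thesis by (simp add: monom_power)
qed

definition Ef :: "nat \<Rightarrow> (nat \<Rightarrow> rat) \<Rightarrow> rat poly" where
  "Ef n a = (\<Sum>m\<le>n. smult (of_nat (n choose m) * a m) ([:0, -1:] ^ (n - m)))"

definition Phif :: "nat \<Rightarrow> nat \<Rightarrow> (nat \<Rightarrow> rat) \<Rightarrow> rat poly poly" where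
  "Phif w1 w2 a = (\<Sum>m1\<le>w1. \<Sum>m2\<le>w2.
                     [: smult (of_nat (w1 choose m1) * of_nat (w2 choose m2) * a (m1 + m2))
                              ([:0, -1:] ^ (w1 - m1)) :] * [:0, -1:] ^ (w2 - m2))"

definition cinv :: "nat \<Rightarrow> rat poly \<Rightarrow> nat \<Rightarrow> rat" where
  "cinv n P m = (-1) ^ (n - m) * coeff P (n - m) / of_nat (n choose m)"

definition pw :: "nat \<Rightarrow> rat \<Rightarrow> rat \<Rightarrow> nat \<Rightarrow> rat" where
  "pw n u v m = u ^ m * v ^ (n - m)"

lemma coeff_Ef: "coeff (Ef n a) k = (if k \<le> n then of_nat (n choose k) * a (n - k) * (-1) ^ k else 0)"
proof -
  have "coeff (Ef n a) k = (\<Sum>m\<le>n. if m = n - k \<and> k \<le> n then of_nat (n choose m) * a m * (-1) ^ (n - m) else 0)"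
    unfolding Ef_def coeff_sum X_power coeff_smult coeff_monom
    by (intro sum.cong refl) auto
  also have "\<dots> = (if k \<le> n then of_nat (n choose (n - k)) * a (n - k) * (-1) ^ (n - (n - k)) else 0)"
    by (cases "k \<le> n") (simp_all add: sum.delta)
  also have "\<dots> = (if k \<le> n then of_nat (n choose k) * a (n - k) * (-1) ^ k else 0)"
    by (auto simp: binomial_symmetric[symmetric])
  finally show ?thesis .
qed

lemma cinv_Ef: assumes "m \<le> n" shows "cinv n (Ef n a) m = a m"
proof -
  have b: "(n choose (n - m)) = (n choose m)" using assms by (simp add: binomial_symmetric[symmetric])
  have nz: "(n choose m) \<noteq> 0" using assms by simp
  have s: "(-1::rat) ^ (n - m) * (-1) ^ (n - m) = 1" by (simp add: power_add[symmetric])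
  have "cinv n (Ef n a) m = ((-1) ^ (n - m) * (-1) ^ (n - m)) * a m * (of_nat (n choose m) / of_nat (n choose m))"
    unfolding cinv_def coeff_Ef using assms b by simp
  also have "\<dots> = a m" using s nz by simp
  finally show ?thesis .
qed

lemma Ef_cinv: assumes "degree P \<le> n" shows "Ef n (cinv n P) = P"
proof (rule poly_eqI)
  fix k
  show "coeff (Ef n (cinv n P)) k = coeff P k"
  proof (cases "k \<le> n")
    case True
    have "(n choose (n - k)) \<noteq> 0" using True by simp
    then show ?thesis using True
      by (simp add: coeff_Ef cinv_def binomial_symmetric[symmetric] power_mult_distrib[symmetric])
  next
    case False
    then show ?thesis using assms by (simp add: coeff_Ef coeff_eq_0)
  qed
qed

lemma Ef_cong: "(\<And>m. m \<le> n \<Longrightarrow> a m = b m) \<Longrightarrow> Ef n a = Ef n b"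
  unfolding Ef_def by (intro sum.cong refl) auto

lemma Phif_cong: "(\<And>m. m \<le> w1 + w2 \<Longrightarrow> a m = b m) \<Longrightarrow> Phif w1 w2 a = Phif w1 w2 b"
  unfolding Phif_def by (intro sum.cong refl) auto

lemma Ef_add: "Ef n (\<lambda>m. f m + h m) = Ef n f + Ef n h"
  unfolding Ef_def by (simp add: distrib_left smult_add_left sum.distrib)

lemma Ef_zero: "Ef n (\<lambda>m. 0) = 0"
  unfolding Ef_def by simp

lemma Ef_sum: "finite K \<Longrightarrow> Ef n (\<lambda>m. \<Sum>k\<in>K. f k m) = (\<Sum>k\<in>K. Ef n (f k))"
  by (induct K rule: finite_induct) (simp_all add: Ef_zero Ef_add)

lemma Ef_scale: "Ef n (\<lambda>m. c * f m) = smult c (Ef n f)"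
  unfolding Ef_def by (simp add: smult_sum_right mult_ac)


lemma Phif_add: "Phif w1 w2 (\<lambda>m. f m + h m) = Phif w1 w2 f + Phif w1 w2 h"
  unfolding Phif_def by (simp add: distrib_left smult_add_left distrib_right sum.distrib)

lemma Phif_zero: "Phif w1 w2 (\<lambda>m. 0) = 0"
  unfolding Phif_def by simp

lemma Phif_sum: "finite K \<Longrightarrow> Phif w1 w2 (\<lambda>m. \<Sum>k\<in>K. f k m) = (\<Sum>k\<in>K. Phif w1 w2 (f k))"
  by (induct K rule: finite_induct) (simp_all add: Phif_zero Phif_add)

lemma Phif_scale: "Phif w1 w2 (\<lambda>m. c * f m) = smult [:c:] (Phif w1 w2 f)"
  unfolding Phif_def by (simp add: smult_sum_right mult_ac)




lemma cinv_add: "cinv n (P + Q) m = cinv n P m + cinv n Q m"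
  unfolding cinv_def by (simp add: add_divide_distrib algebra_simps)

lemma cinv_smult: "cinv n (smult c P) m = c * cinv n P m"
  unfolding cinv_def by (simp add: algebra_simps)

lemma cinv_zero: "cinv n 0 m = 0"
  by (simp add: cinv_def)

lemma cinv_sum: "cinv n (\<Sum>k\<in>K. f k) m = (\<Sum>k\<in>K. cinv n (f k) m)"
  by (induct K rule: infinite_finite_induct) (simp_all add: cinv_add cinv_zero)


lemma Ef_pw: "Ef n (pw n u v) = [:u, -v:] ^ n"
proof (rule poly_eqI)
  fix k
  show "coeff (Ef n (pw n u v)) k = coeff ([:u, -v:] ^ n) k"
  proof (cases "k \<le> n")
    case True
    then have nk: "n - (n - k) = k" by simp
    have "(-v) ^ k = (-1) ^ k * v ^ k" by (rule power_minus)
    then show ?thesis using True nk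
      by (simp add: coeff_Ef coeff_linear_poly_power pw_def)
  next
    case False
    have "degree ([:u, -v:] ^ n) \<le> degree [:u, -v:] * n" by (rule degree_power_le)
    also have "\<dots> \<le> n" by simp
    finally show ?thesis using False by (simp add: coeff_Ef coeff_eq_0)
  qed
qed



lemma Phif_pw: "Phif w1 w2 (pw (w1 + w2) u v) = [:Ef w1 (pw w1 u v):] * Mc (Ef w2 (pw w2 u v))"
proof -
  have "[:Ef w1 (pw w1 u v):] * Mc (Ef w2 (pw w2 u v)) =
    (\<Sum>m2\<le>w2. \<Sum>m1\<le>w1. [:smult (of_nat (w1 choose m1) * pw w1 u v m1) ([:0, -1:] ^ (w1 - m1)):] *
       smult [:of_nat (w2 choose m2) * pw w2 u v m2:] ([:0, -1:] ^ (w2 - m2)))"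
    unfolding Ef_def const_sum Mc_sum Mc_smult Mc_power Mc_X sum_distrib_left sum_distrib_right ..
  also have "\<dots> = (\<Sum>m1\<le>w1. \<Sum>m2\<le>w2. [:smult (of_nat (w1 choose m1) * pw w1 u v m1) ([:0, -1:] ^ (w1 - m1)):] *
       smult [:of_nat (w2 choose m2) * pw w2 u v m2:] ([:0, -1:] ^ (w2 - m2)))"
    by (rule sum.swap)
  also have "\<dots> = Phif w1 w2 (pw (w1 + w2) u v)"
    unfolding Phif_def
  proof (intro sum.cong refl)
    fix m1 m2 assume m1: "m1 \<in> {..w1}" and m2: "m2 \<in> {..w2}"
    have "pw (w1 + w2) u v (m1 + m2) = pw w1 u v m1 * pw w2 u v m2"
    proof -
      have "w1 + w2 - (m1 + m2) = (w1 - m1) + (w2 - m2)" using m1 m2 by auto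
      then show ?thesis unfolding pw_def by (simp add: power_add mult_ac)
    qed
    then show "[:smult (of_nat (w1 choose m1) * pw w1 u v m1) ([:0, -1:] ^ (w1 - m1)):] *
       smult [:of_nat (w2 choose m2) * pw w2 u v m2:] ([:0, -1:] ^ (w2 - m2)) =
      [:smult (of_nat (w1 choose m1) * of_nat (w2 choose m2) * pw (w1 + w2) u v (m1 + m2)) ([:0, -1:] ^ (w1 - m1)):] *
       [:0, -1:] ^ (w2 - m2)"
      by (simp add: mult_ac)
  qed
  finally show ?thesis ..
qed

lemma act1_lin0: "act1 n g ([:u, z:] ^ n) = (smult z (numer g) + smult u (denom g)) ^ n"
  unfolding binomial_ring act1_def
  by (intro sum.cong refl)
     (simp add: coeff_linear_poly_power smult_power of_nat_poly mult_ac)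

lemma act1_lin: "act1 n (a, b, c, d) ([:u, -v:] ^ n) =
   [:u * of_int a + v * of_int b, - (u * of_int c + v * of_int d):] ^ n"
proof -
  have e: "[:u * of_int a + v * of_int b, - (u * of_int c + v * of_int d):] =
     smult (-v) (numer (a, b, c, d)) + smult u (denom (a, b, c, d))"
    by (simp add: numer_def denom_def algebra_simps)
  show ?thesis unfolding e act1_lin0 ..
qed

lemma Phif_act: "act2 w1 w2 (a, b, c, d) (a, b, c, d) (Phif w1 w2 (pw (w1 + w2) u v)) =
  Phif w1 w2 (pw (w1 + w2) (u * of_int a + v * of_int b) (u * of_int c + v * of_int d))"
  unfolding Phif_pw Ef_pw act2_prod act1_lin by simp

lemma Ef_act: "act1 n (a, b, c, d) (Ef n (pw n u v)) =
  Ef n (pw n (u * of_int a + v * of_int b) (u * of_int c + v * of_int d))"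
  unfolding Ef_pw act1_lin by simp

definition dlt :: "nat \<Rightarrow> nat \<Rightarrow> rat" where "dlt k m = (if m = k then 1 else 0)"



lemma dec: "m \<le> w \<Longrightarrow> a m = (\<Sum>k\<le>w. a k * dlt k m)"
  by (simp add: dlt_def if_distrib cong: if_cong)

lemma Phif_dec: "Phif w1 w2 a = (\<Sum>k\<le>w1 + w2. smult [:a k:] (Phif w1 w2 (dlt k)))"
  apply (subst Phif_cong[where b = "\<lambda>m. \<Sum>k\<le>w1 + w2. a k * dlt k m"])
  using dec apply blast
  by (simp add: Phif_sum Phif_scale)

lemma Ef_dec: "Ef w a = (\<Sum>k\<le>w. smult (a k) (Ef w (dlt k)))"
  apply (subst Ef_cong[where b = "\<lambda>m. \<Sum>k\<le>w. a k * dlt k m"])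
  using dec apply blast
  by (simp add: Ef_sum Ef_scale)

lemma vanish:
  fixes L :: "(nat \<Rightarrow> rat) \<Rightarrow> rat poly poly"
  assumes lin: "\<And>a. L a = (\<Sum>k\<le>w. smult [:a k:] (L (dlt k)))"
    and z: "\<And>t. L (pw w t 1) = 0"
  shows "L a = 0"
proof -
  have Dk: "L (dlt k) = 0" if "k \<le> w" for k
  proof (rule poly_eqI)
    fix j
    show "coeff (L (dlt k)) j = coeff 0 j"
    proof (rule poly_eqI)
      fix i
      define p where "p = (\<Sum>k\<le>w. monom (coeff (coeff (L (dlt k)) j) i) k)"
      have "poly p t = 0" for t
      proof -
        have "poly p t = coeff (coeff (\<Sum>k\<le>w. smult [:pw w t 1 k:] (L (dlt k))) j) i"
          unfolding p_def poly_sum coeff_sum by (simp add: pw_def poly_monom mult_ac)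
        also have "\<dots> = 0" using lin[of "pw w t 1"] z[of t] by simp
        finally show ?thesis .
      qed
      then have "p = 0" using poly_all_0_iff_0 by blast
      then have "coeff p k = 0" by simp
      then show "coeff (coeff (L (dlt k)) j) i = coeff (coeff 0 j) i"
        using that unfolding p_def by (simp add: coeff_sum_monom)
    qed
  qed
  show ?thesis unfolding lin[of a] using Dk by simp
qed

lemma key:
  fixes w1 w2 :: nat and g :: mat2
  defines "w \<equiv> w1 + w2"
  shows "act2 w1 w2 g g (Phif w1 w2 a) = Phif w1 w2 (cinv w (act1 w g (Ef w a)))"
proof -
  define T where "T a = cinv w (act1 w g (Ef w a))" for a
  define D where "D a = act2 w1 w2 g g (Phif w1 w2 a) - Phif w1 w2 (T a)" for a
  have Dlin: "D a = (\<Sum>k\<le>w. smult [:a k:] (D (dlt k)))" for a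
  proof -
    have Tl: "T a = (\<lambda>m. \<Sum>k\<le>w. a k * T (dlt k) m)"
      unfolding T_def Ef_dec[of w a] act1_sum act1_smult by (rule ext) (simp add: cinv_sum cinv_smult)
    have P2: "Phif w1 w2 (T a) = (\<Sum>k\<le>w. smult [:a k:] (Phif w1 w2 (T (dlt k))))"
      unfolding Tl by (simp add: Phif_sum Phif_scale)
    show ?thesis unfolding D_def P2 Phif_dec[of w1 w2 a] act2_sum act2_smult w_def[symmetric]
      by (simp add: smult_diff_right sum_subtractf)
  qed
  obtain ga gb gc gd where g: "g = (ga, gb, gc, gd)" by (cases g) auto
  have Dpw: "D (pw w u v) = 0" for u v
  proof -
    have "T (pw w u v) = cinv w (Ef w (pw w (u * of_int ga + v * of_int gb) (u * of_int gc + v * of_int gd)))"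
      unfolding T_def g Ef_act ..
    then have "Phif w1 w2 (T (pw w u v)) = Phif w1 w2 (pw w (u * of_int ga + v * of_int gb) (u * of_int gc + v * of_int gd))"
      by (intro Phif_cong) (simp add: cinv_Ef w_def)
    then show ?thesis unfolding D_def g w_def Phif_act by simp
  qed
  have "D a = 0" by (rule vanish[where w = w]) (rule Dlin, rule Dpw)
  then show ?thesis unfolding D_def T_def by simp
qed

lemma poly_Mc_X: "poly (Mc p) [:0, 1:] = p"
  by (induct p) (simp_all add: Mc_pCons)

lemma diag_Phif: "diag (Phif w1 w2 a) = Ef (w1 + w2) a"
proof -
  define L where "L a = [:diag (Phif w1 w2 a) - Ef (w1 + w2) a:]" for a
  have "L a = 0"
  proof (rule vanish[where w = "w1 + w2"])
    fix a
    have d: "diag (Phif w1 w2 a) = (\<Sum>k\<le>w1 + w2. smult (a k) (diag (Phif w1 w2 (dlt k))))"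
      by (subst Phif_dec) (simp add: diag_def poly_sum)
    show "L a = (\<Sum>k\<le>w1 + w2. smult [:a k:] (L (dlt k)))"
      unfolding L_def d Ef_dec[of "w1 + w2" a] sum_subtractf[symmetric] const_sum
      by (intro sum.cong refl) (simp add: smult_diff_right)
  next
    fix t
    show "L (pw (w1 + w2) t 1) = 0"
      unfolding L_def Phif_pw Ef_pw diag_def by (simp add: poly_Mc_X power_add)
  qed
  then show ?thesis unfolding L_def by simp
qed

lemma diag_V2:
  assumes "Q \<in> V2 w1 w2"
  shows "diag Q = (\<Sum>j\<le>w2. \<Sum>i\<le>w1. monom (coeff (coeff Q j) i) (i + j))"
proof -
  from assms have dQ: "degree Q \<le> w2" and dc: "\<And>j. degree (coeff Q j) \<le> w1" by (auto simp: V2_def)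
  have "diag Q = poly (\<Sum>j\<le>w2. monom (coeff Q j) j) [:0, 1:]"
    unfolding diag_def poly_as_sum_of_monoms'[OF dQ] ..
  also have "\<dots> = (\<Sum>j\<le>w2. (\<Sum>i\<le>w1. monom (coeff (coeff Q j) i) i) * monom 1 j)"
    unfolding poly_sum poly_as_sum_of_monoms'[OF dc] by (simp add: poly_monom X_power)
  also have "\<dots> = (\<Sum>j\<le>w2. \<Sum>i\<le>w1. monom (coeff (coeff Q j) i) (i + j))"
    by (simp add: sum_distrib_right mult_monom)
  finally show ?thesis .
qed


lemma diag_act:
  assumes "Q \<in> V2 w1 w2"
  shows "diag (act2 w1 w2 g g Q) = act1 (w1 + w2) g (diag Q)"
proof -
  have "diag (act2 w1 w2 g g Q) = (\<Sum>j\<le>w2. \<Sum>i\<le>w1.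
     smult (coeff (coeff Q j) i) (numer g ^ i * denom g ^ (w1 - i)) * (numer g ^ j * denom g ^ (w2 - j)))"
    unfolding act2_def diag_def poly_sum by (simp add: poly_Mc_X)
  also have "\<dots> = act1 (w1 + w2) g (diag Q)"
    unfolding diag_V2[OF assms] act1_sum
  proof (intro sum.cong refl)
    fix i j assume i: "i \<in> {..w1}" and j: "j \<in> {..w2}"
    have e: "w1 + w2 - (i + j) = (w1 - i) + (w2 - j)" using i j by auto
    show "smult (coeff (coeff Q j) i) (numer g ^ i * denom g ^ (w1 - i)) * (numer g ^ j * denom g ^ (w2 - j)) =
       act1 (w1 + w2) g (monom (coeff (coeff Q j) i) (i + j))"
    proof -
      have "act1 (w1 + w2) g (monom (coeff (coeff Q j) i) (i + j)) =
          smult (coeff (coeff Q j) i) (numer g ^ (i + j) * denom g ^ ((w1 - i) + (w2 - j)))"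
        using i j by (subst act1_monom) (auto simp only: e)
      also have "\<dots> = smult (coeff (coeff Q j) i) (numer g ^ i * denom g ^ (w1 - i)) * (numer g ^ j * denom g ^ (w2 - j))"
        unfolding power_add mult_smult_left by (simp only: mult_ac)
      finally show ?thesis ..
    qed
  qed
  finally show ?thesis .
qed


lemma V2_add: "P \<in> V2 w1 w2 \<Longrightarrow> Q \<in> V2 w1 w2 \<Longrightarrow> P + Q \<in> V2 w1 w2"
  unfolding V2_def by (auto intro: degree_add_le)

lemma V2_sum: "(\<And>i. i \<in> A \<Longrightarrow> f i \<in> V2 w1 w2) \<Longrightarrow> (\<Sum>i\<in>A. f i) \<in> V2 w1 w2"
  by (induct A rule: infinite_finite_induct) (auto simp: V2_add, auto simp: V2_def)

lemma V2_term:
  assumes "degree A \<le> w1" "k \<le> w2"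
  shows "[:A:] * [:0, -1:] ^ k \<in> V2 w1 w2"
proof -
  have e: "[:A:] * [:0, -1:] ^ k = monom (A * (-1) ^ k) k"
    by (simp add: X_power smult_monom)
  have "degree (A * (-1) ^ k) \<le> w1"
  proof -
    have "degree (A * (-1) ^ k) \<le> degree A + degree ((-1::rat poly) ^ k)" by (rule degree_mult_le)
    also have "degree ((-1::rat poly) ^ k) \<le> degree (-1::rat poly) * k" by (rule degree_power_le)
    finally show ?thesis using assms by simp
  qed
  then show ?thesis unfolding e V2_def using assms by (auto simp: degree_monom_le intro: order.trans[OF degree_monom_le])
qed

lemma Phif_V2: "Phif w1 w2 a \<in> V2 w1 w2"
  unfolding Phif_def
  apply (intro V2_sum V2_term)
   apply (rule order.trans[OF degree_smult_le])
   apply (simp add: X_power)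
   apply (rule order.trans[OF degree_monom_le])
   apply simp
  apply simp
  done

lemma diag_deg: "Q \<in> V2 w1 w2 \<Longrightarrow> degree (diag Q) \<le> w1 + w2"
  unfolding diag_V2 by (intro degree_sum_le) (auto intro: order.trans[OF degree_monom_le])

lemma diag_add: "diag (P + Q) = diag P + diag Q"
  by (simp add: diag_def)

lemma diag_W1: assumes "P \<in> V2_ID w1 w2" shows "diag P \<in> W1 (w1 + w2)"
proof -
  have V: "P \<in> V2 w1 w2" and s: "P + act2 w1 w2 S_mat S_mat P = 0"
    and u: "P + act2 w1 w2 U_mat U_mat P + act2 w1 w2 U2_mat U2_mat P = 0"
    using assms by (auto simp: V2_ID_def)
  have "diag P + act1 (w1 + w2) S_mat (diag P) = diag (P + act2 w1 w2 S_mat S_mat P)"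
    by (simp add: diag_add diag_act[OF V])
  also have "\<dots> = 0" by (simp add: s diag_def)
  finally have 1: "diag P + act1 (w1 + w2) S_mat (diag P) = 0" .
  have "diag P + act1 (w1 + w2) U_mat (diag P) + act1 (w1 + w2) U2_mat (diag P) =
     diag (P + act2 w1 w2 U_mat U_mat P + act2 w1 w2 U2_mat U2_mat P)"
    by (simp add: diag_add diag_act[OF V])
  also have "\<dots> = 0" by (simp add: u diag_def)
  finally have 2: "diag P + act1 (w1 + w2) U_mat (diag P) + act1 (w1 + w2) U2_mat (diag P) = 0" .
  show ?thesis using 1 2 diag_deg[OF V] by (simp add: W1_def V1_def)
qed

lemma Phif_ID: assumes "Ef (w1 + w2) a \<in> W1 (w1 + w2)" shows "Phif w1 w2 a \<in> V2_ID w1 w2"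
proof -
  define w where "w = w1 + w2"
  define P where "P = Ef w a"
  have s: "P + act1 w S_mat P = 0" and u: "P + act1 w U_mat P + act1 w U2_mat P = 0"
    using assms by (auto simp: W1_def P_def w_def)
  have ca: "m \<le> w \<Longrightarrow> cinv w P m = a m" for m unfolding P_def by (rule cinv_Ef)
  have "Phif w1 w2 a + act2 w1 w2 S_mat S_mat (Phif w1 w2 a) =
      Phif w1 w2 (\<lambda>m. a m + cinv w (act1 w S_mat P) m)"
    unfolding key Phif_add w_def P_def ..
  also have "\<dots> = Phif w1 w2 (\<lambda>m. 0)"
  proof (rule Phif_cong)
    fix m assume "m \<le> w1 + w2"
    then have "m \<le> w" by (simp add: w_def)
    then have "a m + cinv w (act1 w S_mat P) m = cinv w (P + act1 w S_mat P) m"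
      by (simp add: cinv_add ca)
    then show "a m + cinv w (act1 w S_mat P) m = 0" by (simp add: s cinv_zero)
  qed
  finally have 1: "Phif w1 w2 a + act2 w1 w2 S_mat S_mat (Phif w1 w2 a) = 0" by (simp add: Phif_zero)
  have "Phif w1 w2 a + act2 w1 w2 U_mat U_mat (Phif w1 w2 a) + act2 w1 w2 U2_mat U2_mat (Phif w1 w2 a) =
      Phif w1 w2 (\<lambda>m. a m + cinv w (act1 w U_mat P) m + cinv w (act1 w U2_mat P) m)"
    unfolding key Phif_add w_def P_def ..
  also have "\<dots> = Phif w1 w2 (\<lambda>m. 0)"
  proof (rule Phif_cong)
    fix m assume "m \<le> w1 + w2"
    then have "m \<le> w" by (simp add: w_def)
    then have "a m + cinv w (act1 w U_mat P) m + cinv w (act1 w U2_mat P) m =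
       cinv w (P + act1 w U_mat P + act1 w U2_mat P) m"
      by (simp add: cinv_add ca)
    then show "a m + cinv w (act1 w U_mat P) m + cinv w (act1 w U2_mat P) m = 0" by (simp add: u cinv_zero)
  qed
  finally have 2: "Phif w1 w2 a + act2 w1 w2 U_mat U_mat (Phif w1 w2 a) + act2 w1 w2 U2_mat U2_mat (Phif w1 w2 a) = 0"
    by (simp add: Phif_zero)
  show ?thesis using 1 2 Phif_V2 by (simp add: V2_ID_def)
qed

theorem mainTheorem7:
  fixes w1 w2 :: nat
  assumes "even w1" "even w2" "w1 \<ge> 2" "w2 \<ge> 2"
  shows "(\<forall>P \<in> V2_ID w1 w2. diag P \<in> W1 (w1 + w2))
    \<and> diag ` V2_ID w1 w2 = W1 (w1 + w2)
    \<and> (\<forall>(a :: nat \<Rightarrow> rat) P.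
          P = (\<Sum>m\<le>w1 + w2. smult (of_nat ((w1 + w2) choose m) * a m)
                                   ([:0, -1:] ^ (w1 + w2 - m)))
          \<and> P \<in> W1 (w1 + w2) \<longrightarrow>
          (let Q = (\<Sum>m1\<le>w1. \<Sum>m2\<le>w2.
                     [: smult (of_nat (w1 choose m1) * of_nat (w2 choose m2) * a (m1 + m2))
                              ([:0, -1:] ^ (w1 - m1)) :] * [:0, -1:] ^ (w2 - m2))
           in Q \<in> V2_ID w1 w2 \<and> diag Q = P))"
proof (intro conjI)
  show "\<forall>P \<in> V2_ID w1 w2. diag P \<in> W1 (w1 + w2)" using diag_W1 by blast
  show "diag ` V2_ID w1 w2 = W1 (w1 + w2)"
  proof
    show "diag ` V2_ID w1 w2 \<subseteq> W1 (w1 + w2)" using diag_W1 by blast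
    show "W1 (w1 + w2) \<subseteq> diag ` V2_ID w1 w2"
    proof
      fix P assume P: "P \<in> W1 (w1 + w2)"
      then have e: "Ef (w1 + w2) (cinv (w1 + w2) P) = P"
        by (intro Ef_cinv) (simp add: W1_def V1_def)
      have "Phif w1 w2 (cinv (w1 + w2) P) \<in> V2_ID w1 w2" by (rule Phif_ID) (simp add: e P)
      moreover have "diag (Phif w1 w2 (cinv (w1 + w2) P)) = P" by (simp add: diag_Phif e)
      ultimately show "P \<in> diag ` V2_ID w1 w2" by (metis image_eqI)
    qed
  qed
  show "\<forall>(a :: nat \<Rightarrow> rat) P.
          P = (\<Sum>m\<le>w1 + w2. smult (of_nat ((w1 + w2) choose m) * a m)
                                   ([:0, -1:] ^ (w1 + w2 - m)))
          \<and> P \<in> W1 (w1 + w2) \<longrightarrow>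
          (let Q = (\<Sum>m1\<le>w1. \<Sum>m2\<le>w2.
                     [: smult (of_nat (w1 choose m1) * of_nat (w2 choose m2) * a (m1 + m2))
                              ([:0, -1:] ^ (w1 - m1)) :] * [:0, -1:] ^ (w2 - m2))
           in Q \<in> V2_ID w1 w2 \<and> diag Q = P)"
  proof (intro allI impI)
    fix a :: "nat \<Rightarrow> rat" and P
    assume h: "P = (\<Sum>m\<le>w1 + w2. smult (of_nat ((w1 + w2) choose m) * a m)
                                   ([:0, -1:] ^ (w1 + w2 - m))) \<and> P \<in> W1 (w1 + w2)"
    then have PE: "P = Ef (w1 + w2) a" by (simp add: Ef_def)
    have "Ef (w1 + w2) a \<in> W1 (w1 + w2)" using h PE by metis
    then have "Phif w1 w2 a \<in> V2_ID w1 w2" by (rule Phif_ID)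
    moreover have "diag (Phif w1 w2 a) = P" using PE diag_Phif by simp
    ultimately show "let Q = (\<Sum>m1\<le>w1. \<Sum>m2\<le>w2.
                     [: smult (of_nat (w1 choose m1) * of_nat (w2 choose m2) * a (m1 + m2))
                              ([:0, -1:] ^ (w1 - m1)) :] * [:0, -1:] ^ (w2 - m2))
           in Q \<in> V2_ID w1 w2 \<and> diag Q = P"
      unfolding Let_def Phif_def by blast
  qed
qed

end
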